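(* Let $0<\varepsilon<1$ be arbitrary and let $n$ be a sufficiently large positive integer. Let $d=4\log n$, $m=n^2 2^d$, and sample $\mathcal{F}\sim\mathcal{F}(m,n,d)$. Then with high probability, every set $S$ of clauses of $\mathcal{F}$ of size $s\le n/(e d^2)$ satisfies $|\mathrm{vars}(S)|\ge(1-\varepsilon)ds$.
   Context: $\log$ is base 2. $\mathcal{F}(m,n,d)$: random $d$-CNF on $n$ variables with $m$ clauses sampled independently and uniformly with replacement from the $\binom{n}{d}2^d$ clauses on $d$ distinct variables. For a set $S$ of clauses, $\mathrm{vars}(S)$ is the set of variables appearing in some clause of $S$. "With high probability" means with probability tending to $1$ as $n\to\infty$. *)

theory Defs
  imports "HOL-Probability.Probability"
begin

text \<open>A clause is a finite set of literals (variable, sign); variables range over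
  {0..<n}; a d-clause has d distinct variables (no variable occurs twice).
  There are (n choose d) * 2^d such clauses.\<close>
definition dclauses :: "nat \<Rightarrow> nat \<Rightarrow> (nat \<times> bool) set set" where
  "dclauses n d = {C. finite C \<and> fst ` C \<subseteq> {..<n} \<and> inj_on fst C \<and> card (fst ` C) = d}"

text \<open>F(m,n,d): m clauses sampled independently and uniformly with replacement,
  i.e. a uniformly random length-m sequence of d-clauses.\<close>
definition random_dcnf :: "nat \<Rightarrow> nat \<Rightarrow> nat \<Rightarrow> (nat \<times> bool) set list pmf" where
  "random_dcnf m n d = pmf_of_set {F. length F = m \<and> set F \<subseteq> dclauses n d}"

text \<open>Variables of a set S of clauses of F (S given as a set of positions in F).\<close>
definition cvars :: "(nat \<times> bool) set list \<Rightarrow> nat set \<Rightarrow> nat set" where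
  "cvars F S = (\<Union>i\<in>S. fst ` (F ! i))"

definition dpar :: "nat \<Rightarrow> nat" where
  "dpar n = nat \<lceil>4 * log 2 (real n)\<rceil>"

definition mpar :: "nat \<Rightarrow> nat" where
  "mpar n = n ^ 2 * 2 ^ dpar n"

end

theory Submission
  imports Defs "HOL-Real_Asymp.Real_Asymp"
begin

lemma pow_fact_le_exp:
  fixes x :: real assumes "0 \<le> x"
  shows "x ^ k / fact k \<le> exp x"
proof -
  have s: "(\<lambda>n. x^n /\<^sub>R fact n) sums exp x" by (rule exp_converges)
  have "sum (\<lambda>n. x^n /\<^sub>R fact n) {k} \<le> suminf (\<lambda>n. x^n /\<^sub>R fact n)"
    by (rule sum_le_suminf) (use s assms in \<open>auto simp: sums_iff\<close>)
  thus ?thesis using s by (simp add: sums_iff divide_inverse mult.commute)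
qed

lemma choose_ratio:
  assumes "t \<le> n"
  shows "real (t choose d) * real n ^ d \<le> real (n choose d) * real t ^ d"
proof (induction d)
  case 0 then show ?case by simp
next
  case (Suc d)
  have a: "real (Suc d) * real (t choose Suc d) = real (t choose d) * (real t - real d)"
    if "d \<le> t" for t
  proof -
    have e: "Suc d * (t choose Suc d) = (t - d) * (t choose d)"
      unfolding binomial_absorption binomial_absorb_comp ..
    have "real (Suc d * (t choose Suc d)) = real ((t - d) * (t choose d))"
      by (simp only: e)
    thus ?thesis using that by (simp add: of_nat_diff algebra_simps)
  qed
  show ?case
  proof (cases "d \<le> t")
    case False
    have "t choose Suc d = 0" using False by (intro binomial_eq_0) simp
    then show ?thesis by (simp del: binomial_eq_0_iff)
  next
    case True
    have dn: "d \<le> n" using True assms by simp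
    have L: "real (Suc d) * (real (t choose Suc d) * real n ^ Suc d)
       = (real (t choose d) * real n ^ d) * ((real t - real d) * real n)"
    proof -
      have "real (Suc d) * (real (t choose Suc d) * real n ^ Suc d)
          = (real (Suc d) * real (t choose Suc d)) * real n ^ Suc d" by (rule mult.assoc[symmetric])
      also have "\<dots> = (real (t choose d) * (real t - real d)) * real n ^ Suc d"
        by (simp only: a[OF True])
      also have "\<dots> = (real (t choose d) * real n ^ d) * ((real t - real d) * real n)"
        by (simp add: mult_ac)
      finally show ?thesis .
    qed
    have R: "real (Suc d) * (real (n choose Suc d) * real t ^ Suc d)
       = (real (n choose d) * real t ^ d) * ((real n - real d) * real t)"
    proof -
      have "real (Suc d) * (real (n choose Suc d) * real t ^ Suc d)
          = (real (Suc d) * real (n choose Suc d)) * real t ^ Suc d" by (rule mult.assoc[symmetric])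
      also have "\<dots> = (real (n choose d) * (real n - real d)) * real t ^ Suc d"
        by (simp only: a[OF dn])
      also have "\<dots> = (real (n choose d) * real t ^ d) * ((real n - real d) * real t)"
        by (simp add: mult_ac)
      finally show ?thesis .
    qed
    have M: "(real (t choose d) * real n ^ d) * ((real t - real d) * real n)
        \<le> (real (n choose d) * real t ^ d) * ((real n - real d) * real t)"
    proof (rule mult_mono[OF Suc.IH])
      have "real d * real t \<le> real d * real n" using assms by (simp add: mult_left_mono)
      then show "(real t - real d) * real n \<le> (real n - real d) * real t"
        by (simp add: algebra_simps)
      show "0 \<le> real (n choose d) * real t ^ d" by simp
      have "real d * real n \<le> real t * real n" using True by (simp add: mult_right_mono)
      then show "0 \<le> (real t - real d) * real n" by (simp add: algebra_simps)
    qed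
    have "real (Suc d) * (real (t choose Suc d) * real n ^ Suc d)
       \<le> real (Suc d) * (real (n choose Suc d) * real t ^ Suc d)"
      unfolding L R by (rule M)
    then show ?thesis by (rule mult_left_le_imp_le) simp
  qed
qed

definition G :: "nat set \<Rightarrow> (nat \<times> bool) set set" where
  "G X = {C. fst ` C = X \<and> inj_on fst C}"

lemma G_rep:
  assumes "C \<in> G X" shows "(\<lambda>x. (x, (x,True) \<in> C)) ` X = C"
proof -
  have f: "fst ` C = X" and i: "inj_on fst C" using assms by (auto simp: G_def)
  have 1: "(x, False) \<notin> C" if "(x,True) \<in> C" for x
    using i that unfolding inj_on_def by fastforce
  show ?thesis
  proof
    show "(\<lambda>x. (x, (x, True) \<in> C)) ` X \<subseteq> C"
    proof
      fix p assume "p \<in> (\<lambda>x. (x, (x, True) \<in> C)) ` X"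
      then obtain x where x: "x \<in> X" "p = (x, (x,True) \<in> C)" by auto
      then obtain b where "(x,b) \<in> C" using f by force
      then show "p \<in> C" using x 1 by (cases "(x,True) \<in> C"; cases b) auto
    qed
    show "C \<subseteq> (\<lambda>x. (x, (x, True) \<in> C)) ` X"
    proof
      fix p assume p: "p \<in> C"
      obtain x b where pe: "p = (x,b)" by (cases p)
      have "x \<in> X" using p pe f by force
      moreover have "b = ((x,True) \<in> C)" using p pe 1 by (cases b) auto
      ultimately show "p \<in> (\<lambda>x. (x, (x, True) \<in> C)) ` X" using pe by auto
    qed
  qed
qed

lemma card_G: assumes "finite X" shows "card (G X) = 2 ^ card X" and "finite (G X)"
proof -
  have b: "bij_betw (\<lambda>C. {x. (x,True) \<in> C}) (G X) (Pow X)"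
  proof (rule bij_betw_byWitness[where f'="\<lambda>A. (\<lambda>x. (x, x \<in> A)) ` X"])
    show "\<forall>a\<in>G X. (\<lambda>x. (x, x \<in> {x. (x, True) \<in> a})) ` X = a"
      using G_rep by auto
    show "\<forall>a'\<in>Pow X. {x. (x, True) \<in> (\<lambda>x. (x, x \<in> a')) ` X} = a'" by auto
    show "(\<lambda>C. {x. (x, True) \<in> C}) ` G X \<subseteq> Pow X" by (force simp: G_def)
    show "(\<lambda>A. (\<lambda>x. (x, x \<in> A)) ` X) ` Pow X \<subseteq> G X"
      by (auto simp: G_def inj_on_def image_image)
  qed
  show "card (G X) = 2 ^ card X" using bij_betw_same_card[OF b] assms by (simp add: card_Pow)
  show "finite (G X)" using bij_betw_finite[OF b] assms by simp
qed

lemma clauses_UN: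
  fixes V :: "nat set"
  assumes "finite V"
  shows   "{C. finite C \<and> fst ` C \<subseteq> V \<and> inj_on fst C \<and> card (fst ` C) = d}
   = (\<Union>X\<in>{X. X \<subseteq> V \<and> card X = d}. G X)"
proof -
  have "finite C" if "fst ` C \<subseteq> V" "inj_on fst C" for C :: "(nat \<times> bool) set"
    using that assms finite_imageD finite_subset by blast
  then show ?thesis unfolding G_def by auto
qed

lemma card_clauses:
  fixes V :: "nat set"
  assumes "finite V"
  shows "card {C::(nat\<times>bool) set. finite C \<and> fst ` C \<subseteq> V \<and> inj_on fst C \<and> card (fst ` C) = d}
         = (card V choose d) * 2 ^ d"
    and "finite {C::(nat\<times>bool) set. finite C \<and> fst ` C \<subseteq> V \<and> inj_on fst C \<and> card (fst ` C) = d}"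
proof -
  have fin: "finite {X. X \<subseteq> V \<and> card X = d}" using assms by simp
  have fX: "finite X" if "X \<in> {X. X \<subseteq> V \<and> card X = d}" for X
    using that assms finite_subset by blast
  have "card (\<Union>X\<in>{X. X \<subseteq> V \<and> card X = d}. G X) = (\<Sum>X\<in>{X. X \<subseteq> V \<and> card X = d}. card (G X))"
    apply (rule card_UN_disjoint[OF fin])
    using fX card_G apply blast
  proof (intro ballI impI)
    fix X Y :: "nat set" assume "X \<noteq> Y"
    then show "G X \<inter> G Y = {}" unfolding G_def by blast
  qed
  also have "\<dots> = (\<Sum>X\<in>{X. X \<subseteq> V \<and> card X = d}. 2 ^ d)"
  proof (rule sum.cong)
    fix X assume X: "X \<in> {X. X \<subseteq> V \<and> card X = d}"
    have "card X = d" using X by blast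
    then show "card (G X) = 2 ^ d" using card_G(1)[OF fX[OF X]] by simp
  qed (rule refl)
  also have "\<dots> = (card V choose d) * 2 ^ d" using n_subsets[OF assms, of d] by simp
  finally show "card {C::(nat\<times>bool) set. finite C \<and> fst ` C \<subseteq> V \<and> inj_on fst C \<and> card (fst ` C) = d}
         = (card V choose d) * 2 ^ d" by (simp only: clauses_UN[OF assms])
  have "finite (\<Union>X\<in>{X. X \<subseteq> V \<and> card X = d}. G X)"
    by (rule finite_UN_I[OF fin]) (rule card_G(2)[OF fX])
  then show "finite {C::(nat\<times>bool) set. finite C \<and> fst ` C \<subseteq> V \<and> inj_on fst C \<and> card (fst ` C) = d}"
    by (simp only: clauses_UN[OF assms])
qed

lemma card_lists_nth:
  assumes "\<And>i. i < m \<Longrightarrow> finite (A i)"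
  shows "card {F. length F = m \<and> (\<forall>i<m. F ! i \<in> A i)} = (\<Prod>i<m. card (A i))"
  using assms
proof (induction m arbitrary: A)
  case 0
  then show ?case by simp
next
  case (Suc m)
  have eq: "{F. length F = Suc m \<and> (\<forall>i<Suc m. F ! i \<in> A i)}
     = (\<lambda>(x,F). x # F) ` (A 0 \<times> {F. length F = m \<and> (\<forall>i<m. F ! i \<in> A (Suc i))})"
  proof (rule set_eqI, rule iffI)
    fix F assume "F \<in> {F. length F = Suc m \<and> (\<forall>i<Suc m. F ! i \<in> A i)}"
    then obtain x G where "F = x # G" "length G = m" "\<forall>i<Suc m. F ! i \<in> A i"
      by (cases F) auto
    then show "F \<in> (\<lambda>(x,F). x # F) ` (A 0 \<times> {F. length F = m \<and> (\<forall>i<m. F ! i \<in> A (Suc i))})"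
      by force
  next
    fix F assume "F \<in> (\<lambda>(x,F). x # F) ` (A 0 \<times> {F. length F = m \<and> (\<forall>i<m. F ! i \<in> A (Suc i))})"
    then show "F \<in> {F. length F = Suc m \<and> (\<forall>i<Suc m. F ! i \<in> A i)}"
      by (auto simp: less_Suc_eq_0_disj)
  qed
  have inj: "inj_on (\<lambda>(x,F). x # F) X" for X :: "('a \<times> 'a list) set"
    by (auto simp: inj_on_def)
  have "card {F. length F = Suc m \<and> (\<forall>i<Suc m. F ! i \<in> A i)}
     = card (A 0) * card {F. length F = m \<and> (\<forall>i<m. F ! i \<in> A (Suc i))}"
    unfolding eq card_image[OF inj] card_cartesian_product ..
  also have "\<dots> = card (A 0) * (\<Prod>i<m. card (A (Suc i)))"
    using Suc.IH[of "\<lambda>i. A (Suc i)"] Suc.prems by simp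
  also have "\<dots> = (\<Prod>i<Suc m. card (A i))" by (rule prod.lessThan_Suc_shift[symmetric])
  finally show ?case .
qed

definition DV :: "nat \<Rightarrow> nat set \<Rightarrow> (nat \<times> bool) set set" where
  "DV d V = {C::(nat\<times>bool) set. finite C \<and> fst ` C \<subseteq> V \<and> inj_on fst C \<and> card (fst ` C) = d}"

definition Om :: "nat \<Rightarrow> nat \<Rightarrow> nat \<Rightarrow> (nat \<times> bool) set list set" where
  "Om m n d = {F. length F = m \<and> set F \<subseteq> dclauses n d}"

definition EE :: "nat \<Rightarrow> nat \<Rightarrow> nat \<Rightarrow> nat set \<Rightarrow> nat set \<Rightarrow> (nat \<times> bool) set list set" where
  "EE m n d S V = {F \<in> Om m n d. \<forall>i\<in>S. F ! i \<in> DV d V}"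

lemma dclauses_DV: "dclauses n d = DV d {..<n}"
  by (simp add: dclauses_def DV_def)

lemma card_DV: "finite V \<Longrightarrow> card (DV d V) = (card V choose d) * 2 ^ d"
  unfolding DV_def by (rule card_clauses(1))

lemma finite_DV: "finite V \<Longrightarrow> finite (DV d V)"
  unfolding DV_def by (rule card_clauses(2))

lemma DV_mono: "V \<subseteq> W \<Longrightarrow> DV d V \<subseteq> DV d W"
  unfolding DV_def by auto

lemma Om_nth: "Om m n d = {F. length F = m \<and> (\<forall>i<m. F ! i \<in> DV d {..<n})}"
  unfolding Om_def dclauses_DV by (auto simp: set_conv_nth)

lemma card_Om: "card (Om m n d) = ((n choose d) * 2 ^ d) ^ m"
  unfolding Om_nth by (subst card_lists_nth) (auto simp: finite_DV card_DV)

lemma finite_Om: "finite (Om m n d)"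
proof -
  have "finite {xs. set xs \<subseteq> DV d {..<n} \<and> length xs = m}"
    by (rule finite_lists_length_eq) (simp add: finite_DV)
  then show ?thesis unfolding Om_def dclauses_DV by (simp add: conj_commute)
qed

lemma Om_ne: "d \<le> n \<Longrightarrow> Om m n d \<noteq> {}"
proof -
  assume "d \<le> n"
  then have "card (Om m n d) \<noteq> 0" by (simp add: card_Om)
  then show ?thesis by auto
qed

lemma EE_nth:
  assumes "S \<subseteq> {..<m}" "V \<subseteq> {..<n}"
  shows "EE m n d S V = {F. length F = m \<and> (\<forall>i<m. F ! i \<in> (if i \<in> S then DV d V else DV d {..<n}))}"
  using assms DV_mono[OF assms(2), of d] unfolding EE_def Om_nth by auto

lemma card_EE:
  assumes "S \<subseteq> {..<m}" "V \<subseteq> {..<n}"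
  shows "card (EE m n d S V) = ((card V choose d) * 2 ^ d) ^ card S * ((n choose d) * 2 ^ d) ^ (m - card S)"
proof -
  have fV: "finite V" using assms(2) finite_subset by blast
  have "card (EE m n d S V) = (\<Prod>i<m. card (if i \<in> S then DV d V else DV d {..<n}))"
    unfolding EE_nth[OF assms] by (rule card_lists_nth) (auto simp: finite_DV fV)
  also have "\<dots> = (\<Prod>i<m. (if i \<in> S then card (DV d V) else card (DV d {..<n})))"
    by (rule prod.cong) auto
  also have "\<dots> = card (DV d V) ^ card ({..<m} \<inter> {x. x \<in> S}) * card (DV d {..<n}) ^ card ({..<m} \<inter> - {x. x \<in> S})"
    by (simp add: prod.If_cases)
  also have "{..<m} \<inter> {x. x \<in> S} = S" using assms(1) by auto
  also have "{..<m} \<inter> - {x. x \<in> S} = {..<m} - S" by auto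
  also have "card ({..<m} - S) = m - card S" using assms(1) by (simp add: card_Diff_subset finite_subset)
  finally show ?thesis by (simp add: card_DV fV)
qed

lemma pow_ratio_aux:
  fixes a b :: real
  assumes "b > 0" "k \<le> m"
  shows "a ^ k * b ^ (m - k) / b ^ m = (a / b) ^ k"
proof -
  have e: "b ^ m = b ^ k * b ^ (m - k)"
    by (subst power_add[symmetric]) (simp add: assms(2))
  have "a ^ k * b ^ (m - k) / (b ^ k * b ^ (m - k)) = a ^ k / b ^ k"
    using assms(1) by (intro nonzero_mult_divide_mult_cancel_right) simp
  then show ?thesis unfolding e power_divide .
qed

lemma prob_EE1:
  assumes "d \<le> n"
  shows "measure (measure_pmf (pmf_of_set (Om m n d))) (EE m n d S V)
     = real (card (EE m n d S V)) / real (card (Om m n d))"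
proof -
  have "Om m n d \<inter> EE m n d S V = EE m n d S V" unfolding EE_def by auto
  then show ?thesis
    using measure_pmf_of_set[OF Om_ne[OF assms] finite_Om] by simp
qed

lemma prob_EE:
  assumes "S \<subseteq> {..<m}" "V \<subseteq> {..<n}" "d \<le> n"
  shows "measure (measure_pmf (pmf_of_set (Om m n d))) (EE m n d S V)
       = (real (card V choose d) / real (n choose d)) ^ card S"
proof -
  have s: "card S \<le> m" using card_mono[OF finite_lessThan assms(1)] by simp
  have pos: "real (n choose d) * 2 ^ d > 0" using assms(3) by simp
  have 2: "real (card (EE m n d S V)) = (real (card V choose d) * 2 ^ d) ^ card S * (real (n choose d) * 2 ^ d) ^ (m - card S)"
    unfolding card_EE[OF assms(1,2)] by (simp only: of_nat_mult of_nat_power of_nat_numeral)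
  have 3: "real (card (Om m n d)) = (real (n choose d) * 2 ^ d) ^ m"
    unfolding card_Om by (simp only: of_nat_mult of_nat_power of_nat_numeral)
  have "measure (measure_pmf (pmf_of_set (Om m n d))) (EE m n d S V)
     = real (card (EE m n d S V)) / real (card (Om m n d))" by (rule prob_EE1[OF assms(3)])
  also have "\<dots> = (real (card V choose d) * 2 ^ d) ^ card S * (real (n choose d) * 2 ^ d) ^ (m - card S) /
     (real (n choose d) * 2 ^ d) ^ m" by (simp only: 2 3)
  also have "\<dots> = ((real (card V choose d) * 2 ^ d) / (real (n choose d) * 2 ^ d)) ^ card S"
    by (rule pow_ratio_aux[OF pos s])
  also have "\<dots> = (real (card V choose d) / real (n choose d)) ^ card S"
  proof -
    have "(real (card V choose d) * 2 ^ d) / (real (n choose d) * 2 ^ d) = real (card V choose d) / real (n choose d)"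
      by (rule nonzero_mult_divide_mult_cancel_right) simp
    then show ?thesis by (simp only:)
  qed
  finally show ?thesis .
qed



definition Good :: "nat \<Rightarrow> nat \<Rightarrow> real \<Rightarrow> (nat \<times> bool) set list set" where
  "Good d n \<epsilon> = {F. \<forall>S. S \<subseteq> {..<length F} \<and> real (card S) \<le> real n / (exp 1 * real d ^ 2)
                  \<longrightarrow> real (card (cvars F S)) \<ge> (1 - \<epsilon>) * real d * real (card S)}"

definition KK :: "nat \<Rightarrow> nat \<Rightarrow> nat" where
  "KK n d = nat \<lfloor>real n / (exp 1 * real d ^ 2)\<rfloor>"

definition tt :: "real \<Rightarrow> nat \<Rightarrow> nat \<Rightarrow> nat" where
  "tt \<epsilon> d s = nat \<lfloor>(1 - \<epsilon>) * real d * real s\<rfloor>"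

definition Sig :: "nat \<Rightarrow> nat \<Rightarrow> real \<Rightarrow> nat \<Rightarrow> nat \<Rightarrow> (nat set \<times> nat set) set" where
  "Sig m n \<epsilon> d s = {S. S \<subseteq> {..<m} \<and> card S = s} \<times> {V. V \<subseteq> {..<n} \<and> card V = tt \<epsilon> d s}"

lemma ds_bound:
  assumes "1 \<le> d" "real s \<le> real n / (exp 1 * real d ^ 2)"
  shows "real d * real s \<le> real n / (exp 1 * real d)" and "real n / (exp 1 * real d) \<le> real n"
proof -
  have dp: "real d > 0" using assms(1) by simp
  have "real d * real s \<le> real d * (real n / (exp 1 * real d ^ 2))"
    using assms(2) dp by (intro mult_left_mono) auto
  also have "real d * (real n / (exp 1 * real d ^ 2)) = real n / (exp 1 * real d)"
    using dp by (simp add: power2_eq_square field_simps)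
  finally show "real d * real s \<le> real n / (exp 1 * real d)" .
  have "1 * 1 \<le> exp 1 * real d" by (rule mult_mono) (use assms(1) in auto)
  then have ed: "1 \<le> exp 1 * real d" by simp
  have "real n / (exp 1 * real d) \<le> real n / 1"
    by (rule divide_left_mono) (use ed in auto)
  then show "real n / (exp 1 * real d) \<le> real n" by simp
qed

lemma tt_le:
  assumes "0 < \<epsilon>" "\<epsilon> < 1"
  shows "real (tt \<epsilon> d s) \<le> (1 - \<epsilon>) * real d * real s" "tt \<epsilon> d s \<le> d * s"
proof -
  have nn: "0 \<le> (1 - \<epsilon>) * real d * real s" using assms by simp
  show 1: "real (tt \<epsilon> d s) \<le> (1 - \<epsilon>) * real d * real s"
    unfolding tt_def using nn by linarith
  have "(1 - \<epsilon>) * real d * real s \<le> real d * real s"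
    using assms by (simp add: mult_right_mono mult_left_le_one_le)
  then have "real (tt \<epsilon> d s) \<le> real (d * s)" using 1 by simp
  then show "tt \<epsilon> d s \<le> d * s" by linarith
qed

lemma bad_cover:
  assumes d1: "1 \<le> d" and e: "0 < \<epsilon>" "\<epsilon> < 1" and F: "F \<in> Om m n d" and nG: "F \<notin> Good d n \<epsilon>"
  shows "F \<in> (\<Union>s\<in>{1..KK n d}. \<Union>p\<in>Sig m n \<epsilon> d s. EE m n d (fst p) (snd p))"
proof -
  from nG obtain S where S: "S \<subseteq> {..<length F}" "real (card S) \<le> real n / (exp 1 * real d ^ 2)"
      "real (card (cvars F S)) < (1 - \<epsilon>) * real d * real (card S)"
    unfolding Good_def by (auto simp: not_le)
  have lenF: "length F = m" using F by (simp add: Om_def)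
  have Fi: "F ! i \<in> dclauses n d" if "i < m" for i
    using F that nth_mem[of i F] by (auto simp: Om_def)
  define s where "s = card S"
  have s1: "1 \<le> s"
  proof (rule ccontr)
    assume "\<not> 1 \<le> s"
    then have "s = 0" by simp
    then have "S = {}" using S(1) finite_subset s_def by fastforce
    then show False using S(3) by (simp add: cvars_def)
  qed
  have sK: "s \<le> KK n d" unfolding KK_def s_def by (rule le_nat_floor) (use S(2) in simp)
  have cv_sub: "cvars F S \<subseteq> {..<n}"
  proof
    fix x assume "x \<in> cvars F S"
    then obtain i where i: "i \<in> S" "x \<in> fst ` (F ! i)" by (auto simp: cvars_def)
    have "i < m" using i(1) S(1) lenF by auto
    then show "x \<in> {..<n}" using Fi i(2) by (auto simp: dclauses_def)
  qed
  have cv_le: "card (cvars F S) \<le> tt \<epsilon> d s"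
    unfolding tt_def s_def by (rule le_nat_floor) (use S(3) in simp)
  have "real (tt \<epsilon> d s) \<le> real d * real s" using tt_le(2)[OF e, of d s] by (simp only: of_nat_mult[symmetric] of_nat_le_iff)
  also have "\<dots> \<le> real n" using ds_bound[OF d1 S(2)] s_def by simp
  finally have t_le: "tt \<epsilon> d s \<le> n" by simp
  obtain V where V: "cvars F S \<subseteq> V" "V \<subseteq> {..<n}" "card V = tt \<epsilon> d s"
    using exists_subset_between[OF cv_le _ cv_sub] t_le by auto
  have "F \<in> EE m n d S V"
    unfolding EE_def
  proof (intro CollectI conjI ballI F)
    fix i assume i: "i \<in> S"
    have "i < m" using i S(1) lenF by auto
    then have "F ! i \<in> DV d {..<n}" using Fi dclauses_DV by auto
    moreover have "fst ` (F ! i) \<subseteq> V" using V(1) i by (auto simp: cvars_def)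
    ultimately show "F ! i \<in> DV d V" by (auto simp: DV_def)
  qed
  moreover have "(S, V) \<in> Sig m n \<epsilon> d s" unfolding Sig_def using S(1) lenF V s_def by auto
  ultimately show ?thesis using s1 sK by force
qed

lemma choose_div_le:
  assumes "t \<le> n" "d \<le> n" "0 < n"
  shows "real (t choose d) / real (n choose d) \<le> (real t / real n) ^ d"
proof -
  have np: "real n > 0" using assms by simp
  have cp: "real (n choose d) > 0" using assms(2) by simp
  have "real (t choose d) * real n ^ d \<le> real (n choose d) * real t ^ d"
    by (rule choose_ratio[OF assms(1)])
  then have "real (t choose d) \<le> real (n choose d) * real t ^ d / real n ^ d"
    using np by (simp add: le_divide_eq)
  then have "real (t choose d) / real (n choose d) \<le> real t ^ d / real n ^ d"
    using cp by (simp add: divide_le_eq mult.commute)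
  then show ?thesis by (simp add: power_divide)
qed

lemma choose_le_pow: "real (m choose s) \<le> real m ^ s"
proof -
  have "(m choose s) * fact s \<le> m ^ s" by (rule binomial_fact_pow)
  moreover have "(m choose s) \<le> (m choose s) * fact s" by simp
  ultimately have "m choose s \<le> m ^ s" by linarith
  then show ?thesis by (metis of_nat_le_iff of_nat_power)
qed

lemma choose_le_pow_fact: "real (n choose t) \<le> real n ^ t / fact t"
proof -
  have "(n choose t) * fact t \<le> n ^ t" by (rule binomial_fact_pow)
  then have "real (n choose t) * fact t \<le> real n ^ t"
    by (metis of_nat_fact of_nat_le_iff of_nat_mult of_nat_power)
  then show ?thesis by (simp add: le_divide_eq)
qed

lemma key_bound:
  fixes n t x :: nat and c :: real
  assumes "t \<le> x" "0 < n" "real t / real n \<le> 1 / c" "1 \<le> c" "\<epsilon> * real x \<le> real x - real t"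
  shows "real n ^ t / fact t * (real t / real n) ^ x \<le> exp (real x) * c powr (- \<epsilon> * real x)"
proof -
  have np: "real n > 0" using assms(2) by simp
  have cp: "c > 0" using assms(4) by simp
  have ex: "x = t + (x - t)" using assms(1) by simp
  have "(real t / real n) ^ x = (real t / real n) ^ t * (real t / real n) ^ (x - t)"
    by (subst ex) (simp only: power_add add_diff_cancel_left')
  then have "real n ^ t / fact t * (real t / real n) ^ x
      = (real t ^ t / fact t) * (real t / real n) ^ (x - t)"
    using np by (simp add: power_divide)
  also have "\<dots> \<le> exp (real t) * (1 / c) ^ (x - t)"
  proof (rule mult_mono)
    show "real t ^ t / fact t \<le> exp (real t)" by (rule pow_fact_le_exp) simp
    show "(real t / real n) ^ (x - t) \<le> (1 / c) ^ (x - t)"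
      by (rule power_mono[OF assms(3)]) simp
  qed auto
  also have "\<dots> \<le> exp (real x) * (1 / c) ^ (x - t)"
    using assms(1) cp by (intro mult_right_mono) auto
  also have "(1 / c) ^ (x - t) = c powr (- real (x - t))"
    using cp by (simp add: powr_minus powr_realpow power_one_over divide_inverse power_inverse)
  also have "c powr (- real (x - t)) \<le> c powr (- \<epsilon> * real x)"
    by (rule powr_mono) (use assms(1,4,5) in \<open>auto simp: of_nat_diff\<close>)
  finally show ?thesis by (simp add: mult_left_mono)
qed


lemma term_bound:
  assumes d1: "1 \<le> d" and e: "0 < \<epsilon>" "\<epsilon> < 1" and sn: "real s \<le> real n / (exp 1 * real d ^ 2)"
    and dn: "d \<le> n"
  shows "real (m choose s) * real (n choose tt \<epsilon> d s) * (real (tt \<epsilon> d s choose d) / real (n choose d)) ^ s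
     \<le> (real m * exp (real d) * (exp 1 * real d) powr (- \<epsilon> * real d)) ^ s"
proof -
  define t where "t = tt \<epsilon> d s"
  define x where "x = d * s"
  define c where "c = exp 1 * real d"
  have n0: "0 < n" using d1 dn by simp
  have c1: "1 \<le> c" unfolding c_def using ds_bound(2)[OF d1 sn] d1
  proof -
    have "1 * 1 \<le> exp 1 * real d" by (rule mult_mono) (use d1 in auto)
    then show "1 \<le> exp 1 * real d" by simp
  qed
  have cp: "0 < c" using c1 by simp
  have tx: "t \<le> x" unfolding t_def x_def by (rule tt_le(2)[OF e])
  have t1: "real t \<le> (1 - \<epsilon>) * real x" unfolding t_def x_def using tt_le(1)[OF e, of d s] by simp
  have xb: "real x \<le> real n / c" unfolding x_def c_def using ds_bound(1)[OF d1 sn] by simp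
  have "real x \<le> (1 - \<epsilon>) * real x + real x" using e by simp
  have tx2: "real t \<le> real x" using tx by simp
  have ttn: "real t \<le> real n / c" using tx2 xb by linarith
  have tn: "t \<le> n" using ttn ds_bound(2)[OF d1 sn] unfolding c_def by linarith
  have tnc: "real t / real n \<le> 1 / c"
  proof -
    have "real t / real n \<le> (real n / c) / real n" using ttn n0 by (intro divide_right_mono) auto
    also have "(real n / c) / real n = 1 / c" using n0 by simp
    finally show ?thesis .
  qed
  have ex: "\<epsilon> * real x \<le> real x - real t" using t1 by (simp add: algebra_simps)
  have r0: "0 \<le> real (t choose d) / real (n choose d)" by simp
  have r1: "real (t choose d) / real (n choose d) \<le> (real t / real n) ^ d"
    by (rule choose_div_le[OF tn dn n0])
  have "(real (t choose d) / real (n choose d)) ^ s \<le> ((real t / real n) ^ d) ^ s"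
    by (rule power_mono[OF r1 r0])
  also have "((real t / real n) ^ d) ^ s = (real t / real n) ^ x"
    unfolding x_def by (simp add: power_mult)
  finally have rs: "(real (t choose d) / real (n choose d)) ^ s \<le> (real t / real n) ^ x" .
  have "real (m choose s) * real (n choose t) * (real (t choose d) / real (n choose d)) ^ s
      \<le> real m ^ s * (real n ^ t / fact t) * (real t / real n) ^ x"
  proof (rule mult_mono[OF mult_mono[OF choose_le_pow choose_le_pow_fact] rs])
  qed auto
  also have "\<dots> = real m ^ s * (real n ^ t / fact t * (real t / real n) ^ x)" by (simp only: mult.assoc)
  also have "\<dots> \<le> real m ^ s * (exp (real x) * c powr (- \<epsilon> * real x))"
    by (rule mult_left_mono[OF key_bound[OF tx n0 tnc c1 ex]]) simp
  also have "\<dots> = (real m * exp (real d) * c powr (- \<epsilon> * real d)) ^ s"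
  proof -
    have "exp (real d) ^ s = exp (real x)" unfolding x_def
      by (simp add: exp_of_nat_mult[symmetric] mult.commute)
    moreover have "(c powr (- \<epsilon> * real d)) ^ s = c powr (- \<epsilon> * real x)"
      unfolding x_def using cp by (simp add: powr_power mult.commute mult.left_commute)
    ultimately show ?thesis by (simp add: power_mult_distrib)
  qed
  finally show ?thesis unfolding t_def c_def .
qed


lemma geom_bound_aux:
  fixes q :: real
  assumes "0 \<le> q" "q \<le> 1/2"
  shows "(\<Sum>s\<in>{1..K}. q ^ s) \<le> 2 * q - 2 * q ^ Suc K"
proof (induction K)
  case 0
  then show ?case by simp
next
  case (Suc K)
  have "(\<Sum>s\<in>{1..Suc K}. q ^ s) = (\<Sum>s\<in>{1..K}. q ^ s) + q ^ Suc K" by simp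
  also have "\<dots> \<le> 2 * q - 2 * q ^ Suc K + q ^ Suc K" using Suc.IH by simp
  also have "\<dots> \<le> 2 * q - 2 * q ^ Suc (Suc K)"
  proof -
    have "0 \<le> q ^ Suc K" using assms by simp
    then have "2 * q * q ^ Suc K \<le> 1 * q ^ Suc K" using assms by (intro mult_right_mono) auto
    then show ?thesis by simp
  qed
  finally show ?case .
qed

lemma geom_bound:
  fixes q :: real
  assumes "0 \<le> q" "q \<le> 1/2"
  shows "(\<Sum>s\<in>{1..K}. q ^ s) \<le> 2 * q"
  using geom_bound_aux[OF assms, of K] assms by (smt (verit) zero_le_power)

lemma card_Sig: "card (Sig m n \<epsilon> d s) = (m choose s) * (n choose tt \<epsilon> d s)"
  and finite_Sig: "finite (Sig m n \<epsilon> d s)"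
proof -
  have "card {S. S \<subseteq> {..<m} \<and> card S = s} = m choose s" using n_subsets[of "{..<m}" s] by simp
  moreover have "card {V. V \<subseteq> {..<n} \<and> card V = tt \<epsilon> d s} = n choose tt \<epsilon> d s"
    using n_subsets[of "{..<n}" "tt \<epsilon> d s"] by simp
  ultimately show "card (Sig m n \<epsilon> d s) = (m choose s) * (n choose tt \<epsilon> d s)"
    unfolding Sig_def card_cartesian_product by simp
  have "finite {S. S \<subseteq> {..<m} \<and> card S = s}" by (rule finite_subset[of _ "Pow {..<m}"]) auto
  moreover have "finite {V. V \<subseteq> {..<n} \<and> card V = tt \<epsilon> d s}" by (rule finite_subset[of _ "Pow {..<n}"]) auto
  ultimately show "finite (Sig m n \<epsilon> d s)" unfolding Sig_def by simp
qed

lemma main_bound: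
  assumes d1: "1 \<le> d" and dn: "d \<le> n" and e: "0 < \<epsilon>" "\<epsilon> < 1"
    and qdef: "q = real m * exp (real d) * (exp 1 * real d) powr (- \<epsilon> * real d)"
    and qh: "q \<le> 1/2"
  shows "measure (measure_pmf (pmf_of_set (Om m n d))) (Good d n \<epsilon>) \<ge> 1 - 2 * q"
proof -
  define P where "P = pmf_of_set (Om m n d)"
  define U where "U = (\<Union>s\<in>{1..KK n d}. \<Union>p\<in>Sig m n \<epsilon> d s. EE m n d (fst p) (snd p))"
  have q0: "0 \<le> q" unfolding qdef by simp
  have sP: "set_pmf P = Om m n d" unfolding P_def
    by (rule set_pmf_of_set[OF Om_ne[OF dn] finite_Om])
  have sub: "(UNIV - Good d n \<epsilon>) \<inter> set_pmf P \<subseteq> U"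
    unfolding sP U_def using bad_cover[OF d1 e] by blast
  have m1: "measure P (UNIV - Good d n \<epsilon>) = 1 - measure P (Good d n \<epsilon>)"
    using measure_pmf.prob_compl[of "Good d n \<epsilon>" P] by simp
  have m2: "measure P (UNIV - Good d n \<epsilon>) = measure P ((UNIV - Good d n \<epsilon>) \<inter> set_pmf P)"
    by (rule measure_Int_set_pmf[symmetric])
  have m3: "measure P ((UNIV - Good d n \<epsilon>) \<inter> set_pmf P) \<le> measure P U"
    by (rule measure_pmf.finite_measure_mono[OF sub]) simp
  have m4: "measure P U \<le> (\<Sum>s\<in>{1..KK n d}. measure P (\<Union>p\<in>Sig m n \<epsilon> d s. EE m n d (fst p) (snd p)))"
    unfolding U_def by (rule measure_pmf.finite_measure_subadditive_finite) auto
  have m5: "measure P (\<Union>p\<in>Sig m n \<epsilon> d s. EE m n d (fst p) (snd p)) \<le> q ^ s"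
    if s: "s \<in> {1..KK n d}" for s
  proof -
    define r where "r = (real (tt \<epsilon> d s choose d) / real (n choose d)) ^ s"
    have sn: "real s \<le> real n / (exp 1 * real d ^ 2)"
    proof -
      have nn: "0 \<le> real n / (exp 1 * real d ^ 2)" by simp
      have "s \<le> nat \<lfloor>real n / (exp 1 * real d ^ 2)\<rfloor>" using s unfolding KK_def by simp
      then show ?thesis using nn by linarith
    qed
    have "measure P (\<Union>p\<in>Sig m n \<epsilon> d s. EE m n d (fst p) (snd p))
        \<le> (\<Sum>p\<in>Sig m n \<epsilon> d s. measure P (EE m n d (fst p) (snd p)))"
      by (rule measure_pmf.finite_measure_subadditive_finite[OF finite_Sig]) auto
    also have "\<dots> = (\<Sum>p\<in>Sig m n \<epsilon> d s. r)"
    proof (rule sum.cong[OF refl])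
      fix p assume p: "p \<in> Sig m n \<epsilon> d s"
      then have p1: "fst p \<subseteq> {..<m}" "card (fst p) = s" and p2: "snd p \<subseteq> {..<n}" "card (snd p) = tt \<epsilon> d s"
        unfolding Sig_def by auto
      show "measure P (EE m n d (fst p) (snd p)) = r"
        unfolding P_def r_def using prob_EE[OF p1(1) p2(1) dn] p1(2) p2(2) by simp
    qed
    also have "\<dots> = real (m choose s) * real (n choose tt \<epsilon> d s) * r"
      by (simp add: card_Sig)
    also have "\<dots> \<le> q ^ s" unfolding r_def qdef by (rule term_bound[OF d1 e sn dn])
    finally show ?thesis .
  qed
  have "(\<Sum>s\<in>{1..KK n d}. measure P (\<Union>p\<in>Sig m n \<epsilon> d s. EE m n d (fst p) (snd p)))
      \<le> (\<Sum>s\<in>{1..KK n d}. q ^ s)" by (rule sum_mono[OF m5])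
  also have "\<dots> \<le> 2 * q" by (rule geom_bound[OF q0 qh])
  finally have "1 - measure P (Good d n \<epsilon>) \<le> 2 * q" using m1 m2 m3 m4 by linarith
  then show ?thesis unfolding P_def by simp
qed



definition qq :: "real \<Rightarrow> nat \<Rightarrow> real" where
  "qq \<epsilon> n = real (mpar n) * exp (real (dpar n)) * (exp 1 * real (dpar n)) powr (- \<epsilon> * real (dpar n))"

lemma qq_bound:
  fixes n d :: nat and \<epsilon> D L :: real
  assumes e: "0 < \<epsilon>" and n2: "2 \<le> n" and LD: "L \<le> D" and Ldef: "L = 4 * log 2 (real n)"
    and D: "D = real d" and Dbig: "exp (3 / \<epsilon>) \<le> D"
  shows "real (n ^ 2 * 2 ^ d) * exp D * (exp 1 * D) powr (- \<epsilon> * D) \<le> 1 / real n"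
proof -
  have np: "0 < real n" using n2 by simp
  have Dp: "0 < D" using Dbig by (smt (verit) exp_gt_zero)
  have l2: "0 < ln (2::real)" "ln (2::real) < 1" by (simp, rule ln_2_less_1)
  have lnn: "ln (real n) \<le> D / 4"
  proof -
    have "4 * (ln (real n) / ln 2) \<le> D" using LD Ldef by (simp add: log_def)
    then have "4 * ln (real n) \<le> D * ln 2" using l2 by (simp add: divide_le_eq mult.commute)
    also have "\<dots> \<le> D" using l2 Dp by (simp add: mult_left_le)
    finally show ?thesis by simp
  qed
  have lnD: "3 / \<epsilon> \<le> ln D" using Dbig Dp by (metis exp_le_cancel_iff exp_ln)
  have eD: "3 \<le> \<epsilon> * ln D" using lnD e by (simp add: divide_le_eq mult.commute)
  have eD2: "3 * D \<le> \<epsilon> * D * ln D"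
    using mult_right_mono[OF eD, of D] Dp by (simp add: mult_ac)
  have lnD0: "0 \<le> ln D"
  proof -
    have "0 \<le> 3 / \<epsilon>" using e by simp
    then show ?thesis using lnD by linarith
  qed
  define A where "A = 3 * ln (real n) + D * ln 2 + D + (- \<epsilon> * D) * (1 + ln D)"
  have A0: "A \<le> 0"
  proof -
    have "D * ln 2 \<le> D" using l2 Dp by (simp add: mult_left_le)
    moreover have "0 \<le> \<epsilon> * D" using e Dp by simp
    moreover have "A = 3 * ln (real n) + D * ln 2 + D - \<epsilon> * D - \<epsilon> * D * ln D"
      unfolding A_def by (simp add: algebra_simps)
    ultimately show ?thesis using lnn eD2 Dp by linarith
  qed
  have 1: "real (n ^ 2 * 2 ^ d) = exp (2 * ln (real n)) * exp (D * ln 2)"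
  proof -
    have "exp (2 * ln (real n)) = real n ^ 2"
      using exp_of_nat_mult[of 2 "ln (real n)"] np by simp
    moreover have "exp (D * ln 2) = 2 ^ d"
      using exp_of_nat_mult[of d "ln (2::real)"] D by simp
    ultimately show ?thesis by simp
  qed
  have 2: "(exp 1 * D) powr (- \<epsilon> * D) = exp ((- \<epsilon> * D) * (1 + ln D))"
    using Dp by (simp add: powr_def ln_mult)
  have "real (n ^ 2 * 2 ^ d) * exp D * (exp 1 * D) powr (- \<epsilon> * D) * real n
      = exp (2 * ln (real n)) * exp (D * ln 2) * exp D * exp ((- \<epsilon> * D) * (1 + ln D)) * exp (ln (real n))"
    unfolding 1 2 using np by simp
  also have "\<dots> = exp A" unfolding A_def by (simp add: exp_add[symmetric] algebra_simps)
  also have "\<dots> \<le> 1" using A0 by simp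
  finally show ?thesis using np by (simp add: le_divide_eq)
qed


lemma dpar_props:
  assumes "2 \<le> n"
  shows "4 * log 2 (real n) \<le> real (dpar n)" "real (dpar n) \<le> 4 * log 2 (real n) + 1"
proof -
  have "0 \<le> log 2 (real n)" using assms by simp
  then have L0: "0 \<le> 4 * log 2 (real n)" by simp
  have "real (dpar n) = real_of_int \<lceil>4 * log 2 (real n)\<rceil>"
    unfolding dpar_def using L0 by simp
  then show "4 * log 2 (real n) \<le> real (dpar n)" "real (dpar n) \<le> 4 * log 2 (real n) + 1"
    by (simp_all add: le_of_int_ceiling of_int_ceiling_le_add_one)
qed

theorem mainTheorem7:
  fixes \<epsilon> :: real
  assumes "0 < \<epsilon>" and "\<epsilon> < 1"
  shows "(\<lambda>n. measure_pmf.prob (random_dcnf (mpar n) n (dpar n))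
            {F. \<forall>S. S \<subseteq> {..<length F} \<and> real (card S) \<le> real n / (exp 1 * real (dpar n) ^ 2)
                  \<longrightarrow> real (card (cvars F S)) \<ge> (1 - \<epsilon>) * real (dpar n) * real (card S)})
         \<longlonglongrightarrow> 1"
proof -
  define f where "f n = measure_pmf.prob (random_dcnf (mpar n) n (dpar n))
            {F. \<forall>S. S \<subseteq> {..<length F} \<and> real (card S) \<le> real n / (exp 1 * real (dpar n) ^ 2)
                  \<longrightarrow> real (card (cvars F S)) \<ge> (1 - \<epsilon>) * real (dpar n) * real (card S)}" for n
  have fG: "f n = measure (measure_pmf (pmf_of_set (Om (mpar n) n (dpar n)))) (Good (dpar n) n \<epsilon>)" for n
    unfolding f_def random_dcnf_def Om_def Good_def ..
  have r1: "filterlim (\<lambda>n::nat. 4 * log 2 (real n)) at_top sequentially" by real_asymp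
  have r2: "eventually (\<lambda>n::nat. 4 * log 2 (real n) + 1 \<le> real n) sequentially" by real_asymp
  have r3: "(\<lambda>n::nat. 1 - 2 / real n) \<longlonglongrightarrow> 1" by real_asymp
  have e1: "eventually (\<lambda>n::nat. max 1 (exp (3 / \<epsilon>)) \<le> 4 * log 2 (real n)) sequentially"
    using r1 unfolding filterlim_at_top by blast
  have e2: "eventually (\<lambda>n::nat. 2 \<le> n) sequentially" by (rule eventually_ge_at_top)
  have low: "eventually (\<lambda>n. 1 - 2 / real n \<le> f n) sequentially"
    using e1 r2 e2
  proof eventually_elim
    case (elim n)
    define d where "d = dpar n"
    have dl: "4 * log 2 (real n) \<le> real d" "real d \<le> 4 * log 2 (real n) + 1"
      using dpar_props[OF elim(3)] d_def by auto
    have d1: "1 \<le> d" using dl(1) elim(1) by simp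
    have dn: "d \<le> n" using dl(2) elim(2) by simp
    have big: "exp (3 / \<epsilon>) \<le> real d" using dl(1) elim(1) by simp
    have qb: "real (mpar n) * exp (real d) * (exp 1 * real d) powr (- \<epsilon> * real d) \<le> 1 / real n"
      unfolding mpar_def d_def[symmetric]
      by (rule qq_bound[OF assms(1) elim(3) dl(1) refl refl]) (use big in simp)
    have "1 / real n \<le> 1 / 2" using elim(3) by simp
    then have qh: "real (mpar n) * exp (real d) * (exp 1 * real d) powr (- \<epsilon> * real d) \<le> 1/2"
      using qb by linarith
    have "1 - 2 * (real (mpar n) * exp (real d) * (exp 1 * real d) powr (- \<epsilon> * real d)) \<le> f n"
      unfolding fG d_def by (rule main_bound[OF _ _ assms refl]) (use d1 dn qh d_def in auto)
    then show ?case using qb by linarith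
  qed
  have up: "eventually (\<lambda>n. f n \<le> 1) sequentially"
    unfolding f_def by (simp add: measure_pmf.prob_le_1)
  have "f \<longlonglongrightarrow> 1" by (rule tendsto_sandwich[OF low up r3 tendsto_const])
  then show ?thesis unfolding f_def .
qed


end
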